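(* Let $\mathcal{A}$ be an abelian category with enough projective and enough injective objects such that $\mathrm{sidp}(\mathcal{A})<\infty$. If $M\in\mathcal{A}$ admits an exact sequence $0\to M\to P^0\to P^1\to\cdots$ with every $P^i$ projective, then $M$ is Gorenstein projective.
   Context: $\mathrm{sidp}(\mathcal{A})$ is the supremum of the injective dimensions of all projective objects of $\mathcal{A}$. An object is Gorenstein projective if it is isomorphic to $Z^0(P^\bullet)$ for an acyclic complex $P^\bullet$ of projectives with $\mathrm{Hom}(P^\bullet,Q)$ acyclic for every projective $Q$. *)

theory Defs
  imports Main "HOL-Library.Extended_Nat"
begin

text \<open>A category with objects of type 'o and morphisms of type 'm, together with a
  preadditive structure (addition and zero morphisms on each hom-set).
  Composition convention: Comp C g f is g after f.\<close>

record ('o, 'm) acat =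
  Obj  :: "'o set"
  Mor  :: "'m set"
  Dom  :: "'m \<Rightarrow> 'o"
  Cod  :: "'m \<Rightarrow> 'o"
  Comp :: "'m \<Rightarrow> 'm \<Rightarrow> 'm"
  Id   :: "'o \<Rightarrow> 'm"
  Add  :: "'m \<Rightarrow> 'm \<Rightarrow> 'm"
  Zero :: "'o \<Rightarrow> 'o \<Rightarrow> 'm"

definition hom :: "('o,'m) acat \<Rightarrow> 'o \<Rightarrow> 'o \<Rightarrow> 'm set" where
  "hom C a b = {f \<in> Mor C. Dom C f = a \<and> Cod C f = b}"

definition is_category :: "('o,'m) acat \<Rightarrow> bool" where
  "is_category C \<longleftrightarrow>
     (\<forall>f \<in> Mor C. Dom C f \<in> Obj C \<and> Cod C f \<in> Obj C) \<and>
     (\<forall>a \<in> Obj C. Id C a \<in> hom C a a) \<and>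
     (\<forall>f \<in> Mor C. \<forall>g \<in> Mor C. Cod C f = Dom C g \<longrightarrow>
         Comp C g f \<in> hom C (Dom C f) (Cod C g)) \<and>
     (\<forall>f \<in> Mor C. \<forall>g \<in> Mor C. \<forall>h \<in> Mor C. Cod C f = Dom C g \<and> Cod C g = Dom C h \<longrightarrow>
         Comp C h (Comp C g f) = Comp C (Comp C h g) f) \<and>
     (\<forall>f \<in> Mor C. Comp C f (Id C (Dom C f)) = f \<and> Comp C (Id C (Cod C f)) f = f)"

definition is_preadditive :: "('o,'m) acat \<Rightarrow> bool" where
  "is_preadditive C \<longleftrightarrow>
     (\<forall>a \<in> Obj C. \<forall>b \<in> Obj C.
        Zero C a b \<in> hom C a b \<and>
        (\<forall>f \<in> hom C a b. \<forall>g \<in> hom C a b. Add C f g \<in> hom C a b \<and> Add C f g = Add C g f) \<and>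
        (\<forall>f \<in> hom C a b. \<forall>g \<in> hom C a b. \<forall>h \<in> hom C a b.
            Add C (Add C f g) h = Add C f (Add C g h)) \<and>
        (\<forall>f \<in> hom C a b. Add C f (Zero C a b) = f) \<and>
        (\<forall>f \<in> hom C a b. \<exists>g \<in> hom C a b. Add C f g = Zero C a b)) \<and>
     (\<forall>a \<in> Obj C. \<forall>b \<in> Obj C. \<forall>c \<in> Obj C.
        \<forall>f \<in> hom C a b. \<forall>f' \<in> hom C a b. \<forall>g \<in> hom C b c. \<forall>g' \<in> hom C b c.
          Comp C g (Add C f f') = Add C (Comp C g f) (Comp C g f') \<and>
          Comp C (Add C g g') f = Add C (Comp C g f) (Comp C g' f))"

definition zero_object :: "('o,'m) acat \<Rightarrow> 'o \<Rightarrow> bool" where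
  "zero_object C z \<longleftrightarrow> z \<in> Obj C \<and>
     (\<forall>a \<in> Obj C. (\<exists>!f. f \<in> hom C z a) \<and> (\<exists>!f. f \<in> hom C a z))"

definition has_biproducts :: "('o,'m) acat \<Rightarrow> bool" where
  "has_biproducts C \<longleftrightarrow>
     (\<forall>a \<in> Obj C. \<forall>b \<in> Obj C. \<exists>c \<in> Obj C. \<exists>i1 i2 p1 p2.
        i1 \<in> hom C a c \<and> i2 \<in> hom C b c \<and> p1 \<in> hom C c a \<and> p2 \<in> hom C c b \<and>
        Comp C p1 i1 = Id C a \<and> Comp C p2 i2 = Id C b \<and>
        Comp C p1 i2 = Zero C b a \<and> Comp C p2 i1 = Zero C a b \<and>
        Add C (Comp C i1 p1) (Comp C i2 p2) = Id C c)"

definition is_kernel :: "('o,'m) acat \<Rightarrow> 'm \<Rightarrow> 'm \<Rightarrow> bool" where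
  "is_kernel C f k \<longleftrightarrow> f \<in> Mor C \<and> k \<in> Mor C \<and> Cod C k = Dom C f \<and>
     Comp C f k = Zero C (Dom C k) (Cod C f) \<and>
     (\<forall>x \<in> Mor C. Cod C x = Dom C f \<and> Comp C f x = Zero C (Dom C x) (Cod C f) \<longrightarrow>
        (\<exists>!u. u \<in> hom C (Dom C x) (Dom C k) \<and> Comp C k u = x))"

definition is_cokernel :: "('o,'m) acat \<Rightarrow> 'm \<Rightarrow> 'm \<Rightarrow> bool" where
  "is_cokernel C f c \<longleftrightarrow> f \<in> Mor C \<and> c \<in> Mor C \<and> Dom C c = Cod C f \<and>
     Comp C c f = Zero C (Dom C f) (Cod C c) \<and>
     (\<forall>x \<in> Mor C. Dom C x = Cod C f \<and> Comp C x f = Zero C (Dom C f) (Cod C x) \<longrightarrow>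
        (\<exists>!u. u \<in> hom C (Cod C c) (Cod C x) \<and> Comp C u c = x))"

definition mono_mor :: "('o,'m) acat \<Rightarrow> 'm \<Rightarrow> bool" where
  "mono_mor C m \<longleftrightarrow> m \<in> Mor C \<and>
     (\<forall>g \<in> Mor C. \<forall>h \<in> Mor C. Cod C g = Dom C m \<and> Cod C h = Dom C m \<and> Dom C g = Dom C h \<and>
        Comp C m g = Comp C m h \<longrightarrow> g = h)"

definition epi_mor :: "('o,'m) acat \<Rightarrow> 'm \<Rightarrow> bool" where
  "epi_mor C e \<longleftrightarrow> e \<in> Mor C \<and>
     (\<forall>g \<in> Mor C. \<forall>h \<in> Mor C. Dom C g = Cod C e \<and> Dom C h = Cod C e \<and> Cod C g = Cod C h \<and>
        Comp C g e = Comp C h e \<longrightarrow> g = h)"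

definition iso_mor :: "('o,'m) acat \<Rightarrow> 'm \<Rightarrow> bool" where
  "iso_mor C f \<longleftrightarrow> f \<in> Mor C \<and>
     (\<exists>g \<in> hom C (Cod C f) (Dom C f). Comp C g f = Id C (Dom C f) \<and> Comp C f g = Id C (Cod C f))"

definition abelian :: "('o,'m) acat \<Rightarrow> bool" where
  "abelian C \<longleftrightarrow> is_category C \<and> is_preadditive C \<and>
     (\<exists>z. zero_object C z) \<and> has_biproducts C \<and>
     (\<forall>f \<in> Mor C. \<exists>k. is_kernel C f k) \<and>
     (\<forall>f \<in> Mor C. \<exists>c. is_cokernel C f c) \<and>
     (\<forall>m. mono_mor C m \<longrightarrow> (\<exists>f. is_kernel C f m)) \<and>
     (\<forall>e. epi_mor C e \<longrightarrow> (\<exists>f. is_cokernel C f e))"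

text \<open>Exactness at the middle object of f : A \<rightarrow> B, g : B \<rightarrow> C': the image of f
  (the kernel of the cokernel of f) and the kernel of g are the same subobject of B.\<close>

definition exact_at :: "('o,'m) acat \<Rightarrow> 'm \<Rightarrow> 'm \<Rightarrow> bool" where
  "exact_at C f g \<longleftrightarrow> f \<in> Mor C \<and> g \<in> Mor C \<and> Cod C f = Dom C g \<and>
     (\<exists>c i k \<theta>. is_cokernel C f c \<and> is_kernel C c i \<and> is_kernel C g k \<and>
        iso_mor C \<theta> \<and> \<theta> \<in> hom C (Dom C i) (Dom C k) \<and> Comp C k \<theta> = i)"

definition projective :: "('o,'m) acat \<Rightarrow> 'o \<Rightarrow> bool" where
  "projective C P \<longleftrightarrow> P \<in> Obj C \<and>
     (\<forall>e f. epi_mor C e \<and> f \<in> hom C P (Cod C e) \<longrightarrow> (\<exists>g \<in> hom C P (Dom C e). Comp C e g = f))"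

definition injective :: "('o,'m) acat \<Rightarrow> 'o \<Rightarrow> bool" where
  "injective C I \<longleftrightarrow> I \<in> Obj C \<and>
     (\<forall>m f. mono_mor C m \<and> f \<in> hom C (Dom C m) I \<longrightarrow> (\<exists>g \<in> hom C (Cod C m) I. Comp C g m = f))"

definition enough_projectives :: "('o,'m) acat \<Rightarrow> bool" where
  "enough_projectives C \<longleftrightarrow>
     (\<forall>A \<in> Obj C. \<exists>P e. projective C P \<and> e \<in> hom C P A \<and> epi_mor C e)"

definition enough_injectives :: "('o,'m) acat \<Rightarrow> bool" where
  "enough_injectives C \<longleftrightarrow>
     (\<forall>A \<in> Obj C. \<exists>I m. injective C I \<and> m \<in> hom C A I \<and> mono_mor C m)"

text \<open>inj_res_len C X n: there is an exact sequence
  0 \<rightarrow> X \<rightarrow> I^0 \<rightarrow> I^1 \<rightarrow> ... \<rightarrow> I^n \<rightarrow> 0 with all I^j injective.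
  Encoded with S 0 = X, S (j+1) = I^j and maps d j : S j \<rightarrow> S (j+1), j = 0..n.\<close>

definition inj_res_len :: "('o,'m) acat \<Rightarrow> 'o \<Rightarrow> nat \<Rightarrow> bool" where
  "inj_res_len C X n \<longleftrightarrow> (\<exists>S d.
     S 0 = X \<and>
     (\<forall>j \<le> n. d j \<in> hom C (S j) (S (Suc j))) \<and>
     (\<forall>j \<le> n. injective C (S (Suc j))) \<and>
     mono_mor C (d 0) \<and>
     (\<forall>j < n. exact_at C (d j) (d (Suc j))) \<and>
     epi_mor C (d n))"

definition inj_dim :: "('o,'m) acat \<Rightarrow> 'o \<Rightarrow> enat" where
  "inj_dim C X = (INF n \<in> {n. inj_res_len C X n}. enat n)"

definition sidp :: "('o,'m) acat \<Rightarrow> enat" where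
  "sidp C = (SUP P \<in> {P. projective C P}. inj_dim C P)"

text \<open>Gorenstein projective: M is isomorphic to Z^0(P) = ker(d^0 : P^0 \<rightarrow> P^1) for an
  acyclic complex (P, d) of projectives (indexed by int, d i : P i \<rightarrow> P (i+1)) such that
  Hom(P, Q) is acyclic for every projective Q.\<close>

definition gorenstein_projective :: "('o,'m) acat \<Rightarrow> 'o \<Rightarrow> bool" where
  "gorenstein_projective C M \<longleftrightarrow> M \<in> Obj C \<and> (\<exists>(P :: int \<Rightarrow> 'o) d.
     (\<forall>i. projective C (P i)) \<and>
     (\<forall>i. d i \<in> hom C (P i) (P (i + 1))) \<and>
     (\<forall>i. exact_at C (d i) (d (i + 1))) \<and>
     (\<forall>Q. projective C Q \<longrightarrow>
        (\<forall>i. \<forall>\<phi> \<in> hom C (P i) Q.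
           Comp C \<phi> (d (i - 1)) = Zero C (P (i - 1)) Q \<longrightarrow>
           (\<exists>\<psi> \<in> hom C (P (i + 1)) Q. \<phi> = Comp C \<psi> (d i)))) \<and>
     (\<exists>k. is_kernel C (d 0) k \<and> Dom C k = M))"

end

theory Submission
  imports Defs
begin

locale ab =
  fixes C :: "('o,'m) acat"
  assumes abel: "abelian C"
begin

lemma cat: "is_category C" and pre: "is_preadditive C"
  using abel unfolding abelian_def by auto

lemma hom_iff: "f \<in> hom C a b \<longleftrightarrow> f \<in> Mor C \<and> Dom C f = a \<and> Cod C f = b"
  by (simp add: hom_def)

lemma mor_hom: "f \<in> Mor C \<Longrightarrow> f \<in> hom C (Dom C f) (Cod C f)"
  by (simp add: hom_def)

lemma hom_obj: "f \<in> hom C a b \<Longrightarrow> a \<in> Obj C \<and> b \<in> Obj C"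
  using cat unfolding is_category_def hom_def by auto

lemma comp_hom: "f \<in> hom C a b \<Longrightarrow> g \<in> hom C b c \<Longrightarrow> Comp C g f \<in> hom C a c"
  using cat unfolding is_category_def hom_def by auto

lemma assoc: "f \<in> hom C a b \<Longrightarrow> g \<in> hom C b c \<Longrightarrow> h \<in> hom C c d \<Longrightarrow>
   Comp C h (Comp C g f) = Comp C (Comp C h g) f"
  using cat unfolding is_category_def hom_def by auto

lemma id_hom: "a \<in> Obj C \<Longrightarrow> Id C a \<in> hom C a a"
  using cat unfolding is_category_def by auto

lemma id_r: "f \<in> hom C a b \<Longrightarrow> Comp C f (Id C a) = f"
  using cat unfolding is_category_def hom_def by auto

lemma id_l: "f \<in> hom C a b \<Longrightarrow> Comp C (Id C b) f = f"
  using cat unfolding is_category_def hom_def by auto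

lemma pre_ab: "a \<in> Obj C \<Longrightarrow> b \<in> Obj C \<Longrightarrow>
        Zero C a b \<in> hom C a b \<and>
        (\<forall>f \<in> hom C a b. \<forall>g \<in> hom C a b. Add C f g \<in> hom C a b \<and> Add C f g = Add C g f) \<and>
        (\<forall>f \<in> hom C a b. \<forall>g \<in> hom C a b. \<forall>h \<in> hom C a b.
            Add C (Add C f g) h = Add C f (Add C g h)) \<and>
        (\<forall>f \<in> hom C a b. Add C f (Zero C a b) = f) \<and>
        (\<forall>f \<in> hom C a b. \<exists>g \<in> hom C a b. Add C f g = Zero C a b)"
  using pre unfolding is_preadditive_def by blast

lemma zero_hom: "a \<in> Obj C \<Longrightarrow> b \<in> Obj C \<Longrightarrow> Zero C a b \<in> hom C a b"
  using pre unfolding is_preadditive_def by auto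

lemma add_hom: "f \<in> hom C a b \<Longrightarrow> g \<in> hom C a b \<Longrightarrow> Add C f g \<in> hom C a b"
  using pre_ab hom_obj[of f a b] by blast

lemma add_comm: "f \<in> hom C a b \<Longrightarrow> g \<in> hom C a b \<Longrightarrow> Add C f g = Add C g f"
  using pre_ab[of a b] hom_obj[of f a b] by blast

lemma add_assoc: "f \<in> hom C a b \<Longrightarrow> g \<in> hom C a b \<Longrightarrow> h \<in> hom C a b \<Longrightarrow>
   Add C (Add C f g) h = Add C f (Add C g h)"
  using pre_ab[of a b] hom_obj[of f a b] by blast

lemma add_zero: "f \<in> hom C a b \<Longrightarrow> Add C f (Zero C a b) = f"
  using pre_ab[of a b] hom_obj[of f a b] by blast

lemma zero_add: "f \<in> hom C a b \<Longrightarrow> Add C (Zero C a b) f = f"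
  using add_zero add_comm zero_hom hom_obj by metis

lemma neg_ex: "f \<in> hom C a b \<Longrightarrow> \<exists>g \<in> hom C a b. Add C f g = Zero C a b"
  using pre_ab[of a b] hom_obj[of f a b] by blast

lemma distl: "f \<in> hom C a b \<Longrightarrow> f' \<in> hom C a b \<Longrightarrow> g \<in> hom C b c \<Longrightarrow>
   Comp C g (Add C f f') = Add C (Comp C g f) (Comp C g f')"
  using pre hom_obj[of f a b] hom_obj[of g b c] unfolding is_preadditive_def by auto

lemma distr: "f \<in> hom C a b \<Longrightarrow> g \<in> hom C b c \<Longrightarrow> g' \<in> hom C b c \<Longrightarrow>
   Comp C (Add C g g') f = Add C (Comp C g f) (Comp C g' f)"
  using pre hom_obj[of f a b] hom_obj[of g b c] unfolding is_preadditive_def by auto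

lemma idem_zero: assumes w: "w \<in> hom C a b" and "w = Add C w w" shows "w = Zero C a b"
proof -
  obtain n where n: "n \<in> hom C a b" "Add C w n = Zero C a b" using neg_ex[OF w] by auto
  have "Zero C a b = Add C (Add C w w) n" using assms n by simp
  also have "\<dots> = Add C w (Add C w n)" using add_assoc w n by simp
  also have "\<dots> = w" using n add_zero w by simp
  finally show ?thesis by simp
qed

lemma comp_zero_r: "g \<in> hom C b c \<Longrightarrow> a \<in> Obj C \<Longrightarrow> Comp C g (Zero C a b) = Zero C a c"
proof -
  assume g: "g \<in> hom C b c" and a: "a \<in> Obj C"
  have z: "Zero C a b \<in> hom C a b" using zero_hom a hom_obj g by auto
  have "Comp C g (Zero C a b) = Comp C g (Add C (Zero C a b) (Zero C a b))" using add_zero z by simp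
  also have "\<dots> = Add C (Comp C g (Zero C a b)) (Comp C g (Zero C a b))" using distl z g by simp
  finally show ?thesis using idem_zero comp_hom z g by metis
qed

lemma comp_zero_l: "f \<in> hom C a b \<Longrightarrow> c \<in> Obj C \<Longrightarrow> Comp C (Zero C b c) f = Zero C a c"
proof -
  assume f: "f \<in> hom C a b" and c: "c \<in> Obj C"
  have z: "Zero C b c \<in> hom C b c" using zero_hom c hom_obj f by auto
  have "Comp C (Zero C b c) f = Comp C (Add C (Zero C b c) (Zero C b c)) f" using add_zero z by simp
  also have "\<dots> = Add C (Comp C (Zero C b c) f) (Comp C (Zero C b c) f)" using distr z f by simp
  finally show ?thesis using idem_zero comp_hom z f by metis
qed

lemma monoD: "mono_mor C m \<Longrightarrow> m \<in> hom C b c \<Longrightarrow> g \<in> hom C a b \<Longrightarrow> h \<in> hom C a b \<Longrightarrow>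
   Comp C m g = Comp C m h \<Longrightarrow> g = h"
  unfolding mono_mor_def hom_def by auto

lemma epiD: "epi_mor C e \<Longrightarrow> e \<in> hom C a b \<Longrightarrow> g \<in> hom C b c \<Longrightarrow> h \<in> hom C b c \<Longrightarrow>
   Comp C g e = Comp C h e \<Longrightarrow> g = h"
  unfolding epi_mor_def hom_def by auto

lemma mono_zero: "mono_mor C m \<Longrightarrow> m \<in> hom C b c \<Longrightarrow> g \<in> hom C a b \<Longrightarrow>
   Comp C m g = Zero C a c \<Longrightarrow> g = Zero C a b"
  by (metis monoD comp_zero_r zero_hom hom_obj)

lemma mono_by_zero:
  assumes m: "m \<in> hom C b c"
    and H: "\<And>a z. z \<in> hom C a b \<Longrightarrow> Comp C m z = Zero C a c \<Longrightarrow> z = Zero C a b"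
  shows "mono_mor C m"
  unfolding mono_mor_def
proof (intro conjI ballI impI)
  show "m \<in> Mor C" using m hom_iff by auto
  fix g h assume g: "g \<in> Mor C" and h: "h \<in> Mor C" and
    e: "Cod C g = Dom C m \<and> Cod C h = Dom C m \<and> Dom C g = Dom C h \<and> Comp C m g = Comp C m h"
  define a where "a = Dom C g"
  have gh: "g \<in> hom C a b" "h \<in> hom C a b" using g h e m unfolding a_def hom_def by auto
  obtain n where n: "n \<in> hom C a b" "Add C h n = Zero C a b" using neg_ex gh by blast
  have zh: "Add C g n \<in> hom C a b" using add_hom gh n by auto
  have "Comp C m (Add C g n) = Add C (Comp C m g) (Comp C m n)" using distl gh n m by auto
  also have "\<dots> = Comp C m (Add C h n)" by (simp add: e distl[OF gh(2) n(1) m])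
  also have "\<dots> = Zero C a c" using n comp_zero_r m hom_obj gh by auto
  finally have z: "Add C g n = Zero C a b" using H zh by auto
  have "g = Add C g (Add C h n)" using n add_zero gh by auto
  also have "\<dots> = Add C g (Add C n h)" using add_comm n gh by auto
  also have "\<dots> = Add C (Add C g n) h" using add_assoc n gh by auto
  also have "\<dots> = h" using z zero_add gh by auto
  finally show "g = h" .
qed

lemma comp_mono: "mono_mor C m \<Longrightarrow> mono_mor C m' \<Longrightarrow> m \<in> hom C a b \<Longrightarrow> m' \<in> hom C b c \<Longrightarrow>
  mono_mor C (Comp C m' m)"
  unfolding mono_mor_def
  apply (intro conjI)
  using comp_hom hom_iff apply blast
  by (smt (verit, ccfv_threshold) assoc comp_hom hom_iff)

lemma comp_epi: "epi_mor C e \<Longrightarrow> epi_mor C e' \<Longrightarrow> e \<in> hom C a b \<Longrightarrow> e' \<in> hom C b c \<Longrightarrow>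
  epi_mor C (Comp C e' e)"
  unfolding epi_mor_def
  apply (intro conjI)
  using comp_hom hom_iff apply blast
  by (smt (verit, ccfv_threshold) assoc comp_hom hom_iff)

end

context ab
begin

lemma ker_ex: "f \<in> Mor C \<Longrightarrow> \<exists>k. is_kernel C f k"
  using abel unfolding abelian_def by blast
lemma coker_ex: "f \<in> Mor C \<Longrightarrow> \<exists>c. is_cokernel C f c"
  using abel unfolding abelian_def by blast
lemma mono_ker: "mono_mor C m \<Longrightarrow> \<exists>f. is_kernel C f m"
  using abel unfolding abelian_def by blast
lemma epi_coker: "epi_mor C e \<Longrightarrow> \<exists>f. is_cokernel C f e"
  using abel unfolding abelian_def by blast

lemma kerD: "is_kernel C f k \<Longrightarrow> f \<in> hom C (Dom C f) (Cod C f) \<and> k \<in> hom C (Dom C k) (Dom C f)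
   \<and> Comp C f k = Zero C (Dom C k) (Cod C f)"
  unfolding is_kernel_def hom_def by auto

lemma cokerD: "is_cokernel C f c \<Longrightarrow> f \<in> hom C (Dom C f) (Cod C f) \<and> c \<in> hom C (Cod C f) (Cod C c)
   \<and> Comp C c f = Zero C (Dom C f) (Cod C c)"
  unfolding is_cokernel_def hom_def by auto

lemma ker_factor: "is_kernel C f k \<Longrightarrow> x \<in> hom C a (Dom C f) \<Longrightarrow> Comp C f x = Zero C a (Cod C f)
   \<Longrightarrow> \<exists>u \<in> hom C a (Dom C k). Comp C k u = x"
  unfolding is_kernel_def hom_def by (metis (mono_tags, lifting) mem_Collect_eq)

lemma coker_factor: "is_cokernel C f c \<Longrightarrow> x \<in> hom C (Cod C f) b \<Longrightarrow> Comp C x f = Zero C (Dom C f) b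
   \<Longrightarrow> \<exists>u \<in> hom C (Cod C c) b. Comp C u c = x"
  unfolding is_cokernel_def hom_def by (metis (mono_tags, lifting) mem_Collect_eq)

lemma ker_univ: assumes K: "is_kernel C f k" and x: "x \<in> hom C a (Dom C f)"
  and fx: "Comp C f x = Zero C a (Cod C f)"
  shows "\<exists>!u. u \<in> hom C a (Dom C k) \<and> Comp C k u = x"
proof -
  have A: "\<forall>x\<in>Mor C. Cod C x = Dom C f \<and> Comp C f x = Zero C (Dom C x) (Cod C f) \<longrightarrow>
        (\<exists>!u. u \<in> hom C (Dom C x) (Dom C k) \<and> Comp C k u = x)"
    using K unfolding is_kernel_def by blast
  have x1: "x \<in> Mor C" "Cod C x = Dom C f" "Dom C x = a" using x hom_iff by auto
  show ?thesis using A[rule_format, of x] x1 fx by simp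
qed

lemma coker_univ: assumes K: "is_cokernel C f c" and x: "x \<in> hom C (Cod C f) b"
  and fx: "Comp C x f = Zero C (Dom C f) b"
  shows "\<exists>!u. u \<in> hom C (Cod C c) b \<and> Comp C u c = x"
proof -
  have A: "\<forall>x\<in>Mor C. Dom C x = Cod C f \<and> Comp C x f = Zero C (Dom C f) (Cod C x) \<longrightarrow>
        (\<exists>!u. u \<in> hom C (Cod C c) (Cod C x) \<and> Comp C u c = x)"
    using K unfolding is_cokernel_def by blast
  have x1: "x \<in> Mor C" "Dom C x = Cod C f" "Cod C x = b" using x hom_iff by auto
  show ?thesis using A[rule_format, of x] x1 fx by simp
qed

lemma ker_mono: assumes K: "is_kernel C f k" shows "mono_mor C k"
proof -
  have kh: "k \<in> hom C (Dom C k) (Dom C f)" "f \<in> hom C (Dom C f) (Cod C f)"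
    and fk: "Comp C f k = Zero C (Dom C k) (Cod C f)" using kerD K by auto
  show ?thesis unfolding mono_mor_def
  proof (intro conjI ballI impI)
    show "k \<in> Mor C" using kh hom_iff by auto
    fix g h assume g: "g \<in> Mor C" and h: "h \<in> Mor C" and
      e: "Cod C g = Dom C k \<and> Cod C h = Dom C k \<and> Dom C g = Dom C h \<and> Comp C k g = Comp C k h"
    define x where "x = Comp C k g"
    have gh: "g \<in> hom C (Dom C g) (Dom C k)" "h \<in> hom C (Dom C g) (Dom C k)" using g h e hom_iff by auto
    have xh: "x \<in> hom C (Dom C g) (Dom C f)" using comp_hom gh kh x_def by auto
    have "Comp C f x = Comp C (Comp C f k) g" unfolding x_def using assoc[OF gh(1) kh] .
    also have "\<dots> = Zero C (Dom C g) (Cod C f)" using fk comp_zero_l gh(1) hom_obj kh(2) by simp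
    finally have "\<exists>!u. u \<in> hom C (Dom C g) (Dom C k) \<and> Comp C k u = x"
      using ker_univ[OF K xh] by simp
    then show "g = h" using gh e x_def by auto
  qed
qed

lemma coker_epi: assumes K: "is_cokernel C f c" shows "epi_mor C c"
proof -
  have kh: "c \<in> hom C (Cod C f) (Cod C c)" "f \<in> hom C (Dom C f) (Cod C f)"
    and fk: "Comp C c f = Zero C (Dom C f) (Cod C c)" using cokerD K by auto
  show ?thesis unfolding epi_mor_def
  proof (intro conjI ballI impI)
    show "c \<in> Mor C" using kh hom_iff by auto
    fix g h assume g: "g \<in> Mor C" and h: "h \<in> Mor C" and
      e: "Dom C g = Cod C c \<and> Dom C h = Cod C c \<and> Cod C g = Cod C h \<and> Comp C g c = Comp C h c"
    define x where "x = Comp C g c"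
    have gh: "g \<in> hom C (Cod C c) (Cod C g)" "h \<in> hom C (Cod C c) (Cod C g)" using g h e hom_iff by auto
    have xh: "x \<in> hom C (Cod C f) (Cod C g)" using comp_hom gh kh x_def by auto
    have "Comp C x f = Comp C g (Comp C c f)" unfolding x_def using assoc[OF kh(2) kh(1) gh(1)] by simp
    also have "\<dots> = Zero C (Dom C f) (Cod C g)" using fk comp_zero_r gh(1) hom_obj kh(2) by simp
    finally have "\<exists>!u. u \<in> hom C (Cod C c) (Cod C g) \<and> Comp C u c = x"
      using coker_univ[OF K xh] by simp
    then show "g = h" using gh e x_def by auto
  qed
qed


lemma ker_intro:
  assumes f: "f \<in> hom C a b" and k: "k \<in> hom C c a" and fk: "Comp C f k = Zero C c b"
    and m: "mono_mor C k"
    and U: "\<And>x d. x \<in> hom C d a \<Longrightarrow> Comp C f x = Zero C d b \<Longrightarrow> \<exists>u\<in>hom C d c. Comp C k u = x"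
  shows "is_kernel C f k"
  unfolding is_kernel_def
proof (intro conjI ballI impI)
  show "f \<in> Mor C" "k \<in> Mor C" "Cod C k = Dom C f" using f k hom_iff by auto
  show "Comp C f k = Zero C (Dom C k) (Cod C f)" using fk f k hom_iff by auto
  fix x assume x: "x \<in> Mor C" and xe: "Cod C x = Dom C f \<and> Comp C f x = Zero C (Dom C x) (Cod C f)"
  have xh: "x \<in> hom C (Dom C x) a" using x xe f hom_iff by auto
  have fx: "Comp C f x = Zero C (Dom C x) b" using xe f hom_iff by auto
  obtain u where u: "u \<in> hom C (Dom C x) c" "Comp C k u = x" using U[OF xh fx] by auto
  have Dk: "Dom C k = c" using k hom_iff by auto
  show "\<exists>!u. u \<in> hom C (Dom C x) (Dom C k) \<and> Comp C k u = x"
  proof (rule ex1I[of _ u])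
    show "u \<in> hom C (Dom C x) (Dom C k) \<and> Comp C k u = x" using u Dk by auto
    fix v assume "v \<in> hom C (Dom C x) (Dom C k) \<and> Comp C k v = x"
    then show "v = u" using monoD[OF m k] u Dk by metis
  qed
qed

lemma coker_intro:
  assumes f: "f \<in> hom C a b" and c: "c \<in> hom C b d" and cf: "Comp C c f = Zero C a d"
    and m: "epi_mor C c"
    and U: "\<And>x e. x \<in> hom C b e \<Longrightarrow> Comp C x f = Zero C a e \<Longrightarrow> \<exists>u\<in>hom C d e. Comp C u c = x"
  shows "is_cokernel C f c"
  unfolding is_cokernel_def
proof (intro conjI ballI impI)
  show "f \<in> Mor C" "c \<in> Mor C" "Dom C c = Cod C f" using f c hom_iff by auto
  show "Comp C c f = Zero C (Dom C f) (Cod C c)" using cf f c hom_iff by auto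
  fix x assume x: "x \<in> Mor C" and xe: "Dom C x = Cod C f \<and> Comp C x f = Zero C (Dom C f) (Cod C x)"
  have xh: "x \<in> hom C b (Cod C x)" using x xe f hom_iff by auto
  have fx: "Comp C x f = Zero C a (Cod C x)" using xe f hom_iff by auto
  obtain u where u: "u \<in> hom C d (Cod C x)" "Comp C u c = x" using U[OF xh fx] by auto
  have Dk: "Cod C c = d" using c hom_iff by auto
  show "\<exists>!u. u \<in> hom C (Cod C c) (Cod C x) \<and> Comp C u c = x"
  proof (rule ex1I[of _ u])
    show "u \<in> hom C (Cod C c) (Cod C x) \<and> Comp C u c = x" using u Dk by auto
    fix v assume "v \<in> hom C (Cod C c) (Cod C x) \<and> Comp C v c = x"
    then show "v = u" using epiD[OF m c] u Dk by metis
  qed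
qed

lemma ker_factor': "is_kernel C f k \<Longrightarrow> x \<in> hom C a (Dom C f) \<Longrightarrow> Comp C f x = Zero C a (Cod C f)
   \<Longrightarrow> \<exists>u \<in> hom C a (Dom C k). Comp C k u = x"
  using ker_univ by blast

lemma coker_factor': "is_cokernel C f c \<Longrightarrow> x \<in> hom C (Cod C f) b \<Longrightarrow> Comp C x f = Zero C (Dom C f) b
   \<Longrightarrow> \<exists>u \<in> hom C (Cod C c) b. Comp C u c = x"
  using coker_univ by blast

lemma mono_ker_coker: assumes m: "mono_mor C k" and c: "is_cokernel C k c" shows "is_kernel C c k"
proof -
  obtain f where f: "is_kernel C f k" using mono_ker m by auto
  have kh: "k \<in> hom C (Dom C k) (Dom C f)" "f \<in> hom C (Dom C f) (Cod C f)"
    and fk: "Comp C f k = Zero C (Dom C k) (Cod C f)" using kerD f by auto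
  have ch: "c \<in> hom C (Cod C k) (Cod C c)" and ck: "Comp C c k = Zero C (Dom C k) (Cod C c)"
    using cokerD c by auto
  have Ck: "Cod C k = Dom C f" using kh hom_iff by auto
  obtain f' where f': "f' \<in> hom C (Cod C c) (Cod C f)" "Comp C f' c = f"
    using coker_factor'[OF c, of f "Cod C f"] kh fk Ck by auto
  show ?thesis
  proof (rule ker_intro[OF ch, of k "Dom C k"])
    show "k \<in> hom C (Dom C k) (Cod C k)" using kh Ck by simp
    show "Comp C c k = Zero C (Dom C k) (Cod C c)" by (rule ck)
    show "mono_mor C k" by (rule m)
    fix x d assume xh: "x \<in> hom C d (Cod C k)" and cx: "Comp C c x = Zero C d (Cod C c)"
    have "Comp C f x = Comp C f' (Comp C c x)" using assoc[OF xh ch f'(1)] f' by simp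
    also have "\<dots> = Zero C d (Cod C f)" using cx comp_zero_r f'(1) hom_obj xh by auto
    finally show "\<exists>u\<in>hom C d (Dom C k). Comp C k u = x"
      using ker_factor'[OF f, of x d] xh Ck by auto
  qed
qed

lemma epi_cancel_zero: "epi_mor C e \<Longrightarrow> e \<in> hom C a b \<Longrightarrow> x \<in> hom C b d \<Longrightarrow>
   Comp C x e = Zero C a d \<Longrightarrow> x = Zero C b d"
  by (metis epiD comp_zero_l zero_hom hom_obj)


lemma coker_precomp_dir:
  assumes e: "epi_mor C e" "e \<in> hom C a b" and f: "f \<in> hom C b d"
  shows "is_cokernel C f c \<Longrightarrow> is_cokernel C (Comp C f e) c"
    and "is_cokernel C (Comp C f e) c \<Longrightarrow> is_cokernel C f c"
proof -
  have fe: "Comp C f e \<in> hom C a d" using comp_hom e f by auto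
  have key: "Comp C x (Comp C f e) = Zero C a y \<longleftrightarrow> Comp C x f = Zero C b y"
    if x: "x \<in> hom C d y" for x y
  proof
    assume "Comp C x (Comp C f e) = Zero C a y"
    then have "Comp C (Comp C x f) e = Zero C a y" using assoc e f x by metis
    then show "Comp C x f = Zero C b y" using epi_cancel_zero e comp_hom f x by blast
  next
    assume "Comp C x f = Zero C b y"
    then show "Comp C x (Comp C f e) = Zero C a y"
      using assoc[OF e(2) f x] comp_zero_l e(2) hom_obj x by metis
  qed
  {
    assume A: "is_cokernel C f c"
    have ch: "c \<in> hom C d (Cod C c)" "Comp C c f = Zero C b (Cod C c)" using cokerD[OF A] f hom_iff by auto
    show "is_cokernel C (Comp C f e) c"
    proof (rule coker_intro[OF fe ch(1)])
      show "Comp C c (Comp C f e) = Zero C a (Cod C c)" using key ch by auto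
      show "epi_mor C c" using coker_epi A by auto
      fix x y assume "x \<in> hom C d y" "Comp C x (Comp C f e) = Zero C a y"
      then show "\<exists>u\<in>hom C (Cod C c) y. Comp C u c = x" using key coker_factor'[OF A] f hom_iff by auto
    qed
  }
  {
    assume A: "is_cokernel C (Comp C f e) c"
    have ch: "c \<in> hom C d (Cod C c)" "Comp C c (Comp C f e) = Zero C a (Cod C c)"
      using cokerD[OF A] fe hom_iff by auto
    show "is_cokernel C f c"
    proof (rule coker_intro[OF f ch(1)])
      show "Comp C c f = Zero C b (Cod C c)" using key ch by auto
      show "epi_mor C c" using coker_epi A by auto
      fix x y assume "x \<in> hom C d y" "Comp C x f = Zero C b y"
      then show "\<exists>u\<in>hom C (Cod C c) y. Comp C u c = x" using key coker_factor'[OF A] fe hom_iff by auto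
    qed
  }
qed

lemma ker_postcomp_dir:
  assumes m: "mono_mor C m" "m \<in> hom C b d" and g: "g \<in> hom C a b"
  shows "is_kernel C g k \<Longrightarrow> is_kernel C (Comp C m g) k"
    and "is_kernel C (Comp C m g) k \<Longrightarrow> is_kernel C g k"
proof -
  have mg: "Comp C m g \<in> hom C a d" using comp_hom m g by auto
  have key: "Comp C (Comp C m g) x = Zero C y d \<longleftrightarrow> Comp C g x = Zero C y b"
    if x: "x \<in> hom C y a" for x y
  proof
    assume "Comp C (Comp C m g) x = Zero C y d"
    then have "Comp C m (Comp C g x) = Zero C y d" using assoc m g x by metis
    then show "Comp C g x = Zero C y b" using mono_zero m comp_hom g x by blast
  next
    assume "Comp C g x = Zero C y b"
    then show "Comp C (Comp C m g) x = Zero C y d"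
      using assoc[OF x g m(2)] comp_zero_r m(2) hom_obj x by metis
  qed
  {
    assume A: "is_kernel C g k"
    have kh: "k \<in> hom C (Dom C k) a" "Comp C g k = Zero C (Dom C k) b" using kerD[OF A] g hom_iff by auto
    show "is_kernel C (Comp C m g) k"
    proof (rule ker_intro[OF mg kh(1)])
      show "Comp C (Comp C m g) k = Zero C (Dom C k) d" using key kh by auto
      show "mono_mor C k" using ker_mono A by auto
      fix x y assume "x \<in> hom C y a" "Comp C (Comp C m g) x = Zero C y d"
      then show "\<exists>u\<in>hom C y (Dom C k). Comp C k u = x" using key ker_factor'[OF A] g hom_iff by auto
    qed
  }
  {
    assume A: "is_kernel C (Comp C m g) k"
    have kh: "k \<in> hom C (Dom C k) a" "Comp C (Comp C m g) k = Zero C (Dom C k) d"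
      using kerD[OF A] mg hom_iff by auto
    show "is_kernel C g k"
    proof (rule ker_intro[OF g kh(1)])
      show "Comp C g k = Zero C (Dom C k) b" using key kh by auto
      show "mono_mor C k" using ker_mono A by auto
      fix x y assume "x \<in> hom C y a" "Comp C g x = Zero C y b"
      then show "\<exists>u\<in>hom C y (Dom C k). Comp C k u = x" using key ker_factor'[OF A] mg hom_iff by auto
    qed
  }
qed

lemma exact_precomp:
  assumes e: "epi_mor C e" "e \<in> hom C a b" and f: "f \<in> hom C b d"
  shows "exact_at C (Comp C f e) g \<longleftrightarrow> exact_at C f g"
proof -
  have fe: "Comp C f e \<in> hom C a d" using comp_hom e f by auto
  have "is_cokernel C (Comp C f e) c \<longleftrightarrow> is_cokernel C f c" for c
    using coker_precomp_dir[OF e f] by blast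
  then show ?thesis unfolding exact_at_def
    using fe f hom_iff by simp
qed

lemma exact_postcomp:
  assumes m: "mono_mor C m" "m \<in> hom C b d" and g: "g \<in> hom C a b"
  shows "exact_at C f (Comp C m g) \<longleftrightarrow> exact_at C f g"
proof -
  have mg: "Comp C m g \<in> hom C a d" using comp_hom m g by auto
  have "is_kernel C (Comp C m g) k \<longleftrightarrow> is_kernel C g k" for k
    using ker_postcomp_dir[OF m g] by blast
  then show ?thesis unfolding exact_at_def
    using mg g hom_iff by simp
qed

lemma iso_id: "a \<in> Obj C \<Longrightarrow> iso_mor C (Id C a)"
  unfolding iso_mor_def using id_hom[of a] hom_iff id_l by (metis)

lemma exact_ker: assumes k: "is_kernel C g k" shows "exact_at C k g"
proof -
  have kh: "k \<in> hom C (Dom C k) (Dom C g)" "g \<in> hom C (Dom C g) (Cod C g)" using kerD k by auto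
  obtain c where c: "is_cokernel C k c" using coker_ex kh hom_iff by blast
  have ck: "is_kernel C c k" using mono_ker_coker ker_mono k c by blast
  have "iso_mor C (Id C (Dom C k))" "Id C (Dom C k) \<in> hom C (Dom C k) (Dom C k)"
    "Comp C k (Id C (Dom C k)) = k"
    using iso_id id_hom id_r kh hom_obj by auto
  moreover have "k \<in> Mor C" "g \<in> Mor C" "Cod C k = Dom C g" using kh hom_iff by auto
  ultimately show ?thesis unfolding exact_at_def using c k ck by blast
qed

end

context ab
begin

lemma exactD:
  assumes E: "exact_at C f g"
  shows "\<exists>c. is_cokernel C f c \<and> Comp C g f = Zero C (Dom C f) (Cod C g) \<and>
     (\<forall>x y. x \<in> hom C y (Cod C f) \<longrightarrow> Comp C g x = Zero C y (Cod C g) \<longrightarrow> Comp C c x = Zero C y (Cod C c))"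
proof -
  obtain c i k \<theta> where c: "is_cokernel C f c" and i: "is_kernel C c i" and k: "is_kernel C g k"
    and iso: "iso_mor C \<theta>" and th: "\<theta> \<in> hom C (Dom C i) (Dom C k)" and kth: "Comp C k \<theta> = i"
    and fg: "Cod C f = Dom C g"
    using E unfolding exact_at_def by blast
  have ch: "c \<in> hom C (Cod C f) (Cod C c)" "f \<in> hom C (Dom C f) (Cod C f)" "Comp C c f = Zero C (Dom C f) (Cod C c)"
    using cokerD[OF c] by auto
  have Dc: "Dom C c = Cod C f" using ch hom_iff by auto
  have ih: "i \<in> hom C (Dom C i) (Cod C f)" "Comp C c i = Zero C (Dom C i) (Cod C c)"
    using kerD[OF i] Dc by auto
  have kh: "k \<in> hom C (Dom C k) (Cod C f)" "g \<in> hom C (Cod C f) (Cod C g)" "Comp C g k = Zero C (Dom C k) (Cod C g)"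
    using kerD[OF k] fg by auto
  obtain \<theta>' where th': "\<theta>' \<in> hom C (Dom C k) (Dom C i)" "Comp C \<theta> \<theta>' = Id C (Dom C k)"
    using iso th hom_iff unfolding iso_mor_def by auto
  have kk: "k = Comp C i \<theta>'"
  proof -
    have "k = Comp C k (Comp C \<theta> \<theta>')" using th' id_r kh by simp
    also have "\<dots> = Comp C i \<theta>'" using assoc[OF th'(1) th kh(1)] kth by simp
    finally show ?thesis .
  qed
  obtain f'' where f'': "f'' \<in> hom C (Dom C f) (Dom C i)" "Comp C i f'' = f"
    using ker_factor'[OF i, of f "Dom C f"] ch Dc by auto
  have gf: "Comp C g f = Zero C (Dom C f) (Cod C g)"
  proof -
    have "Comp C g f = Comp C g (Comp C k (Comp C \<theta> f''))"
      using assoc[OF f''(1) th kh(1)] kth f'' by simp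
    also have "\<dots> = Comp C (Comp C g k) (Comp C \<theta> f'')"
      using assoc[OF comp_hom[OF f''(1) th] kh(1) kh(2)] by simp
    also have "\<dots> = Zero C (Dom C f) (Cod C g)"
      using kh(3) comp_zero_l comp_hom[OF f''(1) th] hom_obj kh(2) by simp
    finally show ?thesis .
  qed
  have X: "Comp C c x = Zero C y (Cod C c)"
    if x: "x \<in> hom C y (Cod C f)" and gx: "Comp C g x = Zero C y (Cod C g)" for x y
  proof -
    obtain x' where x': "x' \<in> hom C y (Dom C k)" "Comp C k x' = x"
      using ker_factor'[OF k, of x y] x gx fg by auto
    have "Comp C c x = Comp C c (Comp C i (Comp C \<theta>' x'))"
      using assoc[OF x'(1) th'(1) ih(1)] kk x' by simp
    also have "\<dots> = Comp C (Comp C c i) (Comp C \<theta>' x')"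
      using assoc[OF comp_hom[OF x'(1) th'(1)] ih(1) ch(1)] by simp
    also have "\<dots> = Zero C y (Cod C c)"
      using ih(2) comp_zero_l comp_hom[OF x'(1) th'(1)] hom_obj ch(1) by simp
    finally show ?thesis .
  qed
  show ?thesis using c gf X by blast
qed

lemma exact_comp_zero: "exact_at C f g \<Longrightarrow> Comp C g f = Zero C (Dom C f) (Cod C g)"
  using exactD by blast

lemma exact_mono_factor:
  assumes E: "exact_at C f g"
  shows "\<exists>c j. is_cokernel C f c \<and> mono_mor C j \<and> j \<in> hom C (Cod C c) (Cod C g) \<and> g = Comp C j c"
proof -
  obtain c where c: "is_cokernel C f c" and gf: "Comp C g f = Zero C (Dom C f) (Cod C g)"
    and X: "\<And>x y. x \<in> hom C y (Cod C f) \<Longrightarrow> Comp C g x = Zero C y (Cod C g) \<Longrightarrow> Comp C c x = Zero C y (Cod C c)"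
    using exactD[OF E] by blast
  have ch: "c \<in> hom C (Cod C f) (Cod C c)" "f \<in> hom C (Dom C f) (Cod C f)" "Comp C c f = Zero C (Dom C f) (Cod C c)"
    using cokerD[OF c] by auto
  have gh: "g \<in> hom C (Cod C f) (Cod C g)" using E unfolding exact_at_def using hom_iff by auto
  obtain j where j: "j \<in> hom C (Cod C c) (Cod C g)" "Comp C j c = g"
    using coker_factor'[OF c gh] gf by auto
  have cepi: "epi_mor C c" using coker_epi c by auto
  have "mono_mor C j"
  proof (rule mono_by_zero[OF j(1)])
    fix a z assume z: "z \<in> hom C a (Cod C c)" and jz: "Comp C j z = Zero C a (Cod C g)"
    obtain q where q: "is_cokernel C z q" using coker_ex z hom_iff by blast
    have qh: "q \<in> hom C (Cod C c) (Cod C q)" "Comp C q z = Zero C a (Cod C q)"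
      using cokerD[OF q] z hom_iff by auto
    obtain j' where j': "j' \<in> hom C (Cod C q) (Cod C g)" "Comp C j' q = j"
      using coker_factor'[OF q, of j "Cod C g"] j z jz hom_iff by auto
    define e where "e = Comp C q c"
    have eh: "e \<in> hom C (Cod C f) (Cod C q)" using comp_hom ch qh e_def by auto
    have eepi: "epi_mor C e" using comp_epi[OF cepi coker_epi[OF q] ch(1) qh(1)] e_def by simp
    have ge: "g = Comp C j' e"
      using assoc[OF ch(1) qh(1) j'(1)] j' j e_def by simp
    have ecok: "is_cokernel C f e"
    proof (rule coker_intro[OF ch(2) eh])
      show "Comp C e f = Zero C (Dom C f) (Cod C q)"
        using e_def assoc[OF ch(2) ch(1) qh(1)] ch(3) comp_zero_r qh(1) hom_obj ch(2) by simp
      show "epi_mor C e" by (rule eepi)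
      fix x w assume x: "x \<in> hom C (Cod C f) w" and xf: "Comp C x f = Zero C (Dom C f) w"
      obtain h where h: "is_cokernel C h e" using epi_coker eepi by blast
      have hh: "h \<in> hom C (Dom C h) (Cod C f)" "Comp C e h = Zero C (Dom C h) (Cod C q)"
        using cokerD[OF h] eh hom_iff by auto
      have "Comp C g h = Comp C j' (Comp C e h)" using ge assoc[OF hh(1) eh j'(1)] by simp
      also have "\<dots> = Zero C (Dom C h) (Cod C g)" using hh comp_zero_r j'(1) hom_obj by simp
      finally have ch0: "Comp C c h = Zero C (Dom C h) (Cod C c)" using X hh by blast
      obtain x' where x': "x' \<in> hom C (Cod C c) w" "Comp C x' c = x"
        using coker_factor'[OF c x] xf by auto
      have "Comp C x h = Comp C x' (Comp C c h)" using assoc[OF hh(1) ch(1) x'(1)] x' by simp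
      also have "\<dots> = Zero C (Dom C h) w" using ch0 comp_zero_r x'(1) hom_obj hh(1) by simp
      finally have xh0: "Comp C x h = Zero C (Dom C h) w" .
      show "\<exists>u\<in>hom C (Cod C q) w. Comp C u e = x"
        using coker_factor'[OF h, of x w] x xh0 hh eh hom_iff by auto
    qed
    obtain u where u: "u \<in> hom C (Cod C q) (Cod C c)" "Comp C u e = c"
      using coker_factor'[OF ecok ch(1)] ch(3) eh hom_iff by auto
    have "Comp C (Comp C u q) c = Comp C (Id C (Cod C c)) c"
      using assoc[OF ch(1) qh(1) u(1)] u e_def id_l ch(1) by simp
    then have uq: "Comp C u q = Id C (Cod C c)"
      using epiD[OF cepi ch(1)] comp_hom[OF qh(1) u(1)] id_hom hom_obj ch(1) by blast
    have "z = Comp C (Comp C u q) z" using uq id_l z by simp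
    also have "\<dots> = Comp C u (Comp C q z)" using assoc[OF z qh(1) u(1)] by simp
    also have "\<dots> = Zero C a (Cod C c)" using qh(2) comp_zero_r u(1) hom_obj z by simp
    finally show "z = Zero C a (Cod C c)" .
  qed
  then show ?thesis using c j by auto
qed

lemma exact_mono_ker:
  assumes E: "exact_at C f g" and m: "mono_mor C f"
  shows "is_kernel C g f"
proof -
  obtain c where c: "is_cokernel C f c" and gf: "Comp C g f = Zero C (Dom C f) (Cod C g)"
    and X: "\<And>x y. x \<in> hom C y (Cod C f) \<Longrightarrow> Comp C g x = Zero C y (Cod C g) \<Longrightarrow> Comp C c x = Zero C y (Cod C c)"
    using exactD[OF E] by blast
  have fc: "is_kernel C c f" using mono_ker_coker m c by auto
  have fh: "f \<in> hom C (Dom C f) (Cod C f)" using cokerD c by auto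
  have gh: "g \<in> hom C (Cod C f) (Cod C g)" using E unfolding exact_at_def using hom_iff by auto
  show ?thesis
  proof (rule ker_intro[OF gh fh gf m])
    fix x y assume "x \<in> hom C y (Cod C f)" "Comp C g x = Zero C y (Cod C g)"
    then show "\<exists>u\<in>hom C y (Dom C f). Comp C f u = x"
      using X ker_factor'[OF fc, of x y] cokerD c hom_iff by auto
  qed
qed

end

context ab
begin

lemma mono_epi_retract:
  assumes d: "d \<in> hom C X I" and m: "mono_mor C d" and e: "epi_mor C d"
  shows "\<exists>u\<in>hom C I X. Comp C u d = Id C X"
proof -
  obtain f where f: "is_kernel C f d" using mono_ker m by blast
  have fh: "f \<in> hom C I (Cod C f)" "Comp C f d = Zero C X (Cod C f)" using kerD[OF f] d hom_iff by auto
  have f0: "f = Zero C I (Cod C f)" using epi_cancel_zero[OF e d fh(1) fh(2)] .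
  have I: "I \<in> Obj C" "X \<in> Obj C" using hom_obj d by auto
  have "Comp C f (Id C I) = Zero C I (Cod C f)" using id_r fh f0 by simp
  then obtain u where u: "u \<in> hom C I (Dom C d)" "Comp C d u = Id C I"
    using ker_factor'[OF f, of "Id C I" I] id_hom I fh hom_iff by auto
  have uh: "u \<in> hom C I X" using u d hom_iff by auto
  have "Comp C d (Comp C u d) = Comp C d (Id C X)"
    using assoc[OF d uh d] u id_l id_r d by simp
  then have "Comp C u d = Id C X" using monoD[OF m d] comp_hom[OF d uh] id_hom I by blast
  then show ?thesis using uh by auto
qed

lemma inj_ext:
  assumes E: "exact_at C f g" and fh: "f \<in> hom C A B" and gh: "g \<in> hom C B D"
    and I: "injective C I" and ph: "\<phi> \<in> hom C B I" and pf: "Comp C \<phi> f = Zero C A I"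
  shows "\<exists>\<psi>\<in>hom C D I. Comp C \<psi> g = \<phi>"
proof -
  obtain c j where c: "is_cokernel C f c" and j: "mono_mor C j" "j \<in> hom C (Cod C c) (Cod C g)"
    and gj: "g = Comp C j c" using exact_mono_factor[OF E] by blast
  have ch: "c \<in> hom C B (Cod C c)" using cokerD[OF c] fh hom_iff by auto
  obtain p where p: "p \<in> hom C (Cod C c) I" "Comp C p c = \<phi>"
    using coker_factor'[OF c, of \<phi> I] ph pf fh hom_iff by auto
  obtain \<psi> where psi: "\<psi> \<in> hom C (Cod C j) I" "Comp C \<psi> j = p"
    using I j p hom_iff unfolding injective_def by metis
  have Cj: "Cod C j = D" using j gh hom_iff by auto
  have psi2: "\<psi> \<in> hom C (Cod C g) I" using psi j hom_iff by auto
  have "Comp C \<psi> g = \<phi>" using gj assoc[OF ch j(2) psi2] psi p by simp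
  then show ?thesis using psi Cj by auto
qed

lemma epi_left: assumes e: "epi_mor C (Comp C j c)" and c: "c \<in> hom C a b" and j: "j \<in> hom C b d"
  shows "epi_mor C j"
  unfolding epi_mor_def
proof (intro conjI ballI impI)
  show "j \<in> Mor C" using j hom_iff by auto
  fix g h assume g: "g \<in> Mor C" and h: "h \<in> Mor C" and
    E: "Dom C g = Cod C j \<and> Dom C h = Cod C j \<and> Cod C g = Cod C h \<and> Comp C g j = Comp C h j"
  have gh: "g \<in> hom C d (Cod C g)" "h \<in> hom C d (Cod C g)" using g h E j hom_iff by auto
  have "Comp C g (Comp C j c) = Comp C h (Comp C j c)" using assoc[OF c j gh(1)] assoc[OF c j gh(2)] E by simp
  then show "g = h" using epiD[OF e comp_hom[OF c j] gh] by simp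
qed

lemma claim:
  assumes "inj_res_len C X m"
    and "\<forall>j. e j \<in> hom C (T j) (T (Suc j))"
    and "\<forall>j. exact_at C (e j) (e (Suc j))"
    and "\<forall>j. projective C (T j)"
    and "\<phi> \<in> hom C (T (Suc 0)) X"
    and "Comp C \<phi> (e 0) = Zero C (T 0) X"
  shows "\<exists>\<psi>\<in>hom C (T (Suc (Suc 0))) X. Comp C \<psi> (e (Suc 0)) = \<phi>"
  using assms
proof (induction m arbitrary: X T e \<phi>)
  case 0
  obtain S d where S: "S 0 = X" "d 0 \<in> hom C (S 0) (S (Suc 0))" "injective C (S (Suc 0))"
    "mono_mor C (d 0)" "epi_mor C (d 0)"
    using "0.prems"(1) unfolding inj_res_len_def by auto
  have dh: "d 0 \<in> hom C X (S (Suc 0))" using S by simp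
  obtain u where u: "u \<in> hom C (S (Suc 0)) X" "Comp C u (d 0) = Id C X"
    using mono_epi_retract[OF dh S(4) S(5)] by auto
  have eh: "e 0 \<in> hom C (T 0) (T (Suc 0))" "e (Suc 0) \<in> hom C (T (Suc 0)) (T (Suc (Suc 0)))"
    using "0.prems"(2) by auto
  have dp: "Comp C (d 0) \<phi> \<in> hom C (T (Suc 0)) (S (Suc 0))" using comp_hom "0.prems"(5) dh by auto
  have "Comp C (Comp C (d 0) \<phi>) (e 0) = Comp C (d 0) (Comp C \<phi> (e 0))"
    using assoc[OF eh(1) "0.prems"(5) dh] by simp
  also have "\<dots> = Zero C (T 0) (S (Suc 0))" using "0.prems"(6) comp_zero_r dh hom_obj eh(1) by simp
  finally obtain \<psi> where psi: "\<psi> \<in> hom C (T (Suc (Suc 0))) (S (Suc 0))" "Comp C \<psi> (e (Suc 0)) = Comp C (d 0) \<phi>"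
    using inj_ext[OF _ eh S(3) dp] "0.prems"(3) by blast
  have "Comp C (Comp C u \<psi>) (e (Suc 0)) = \<phi>"
    using assoc[OF eh(2) psi(1) u(1)] psi assoc[OF "0.prems"(5) dh u(1)] u id_l "0.prems"(5) by simp
  then show ?case using comp_hom[OF psi(1) u(1)] by blast
next
  case (Suc m)
  obtain S d where S: "S 0 = X" "\<forall>j\<le>Suc m. d j \<in> hom C (S j) (S (Suc j))"
    "\<forall>j\<le>Suc m. injective C (S (Suc j))" "mono_mor C (d 0)"
    "\<forall>j<Suc m. exact_at C (d j) (d (Suc j))" "epi_mor C (d (Suc m))"
    using Suc.prems(1) unfolding inj_res_len_def by auto
  have d0: "d 0 \<in> hom C X (S (Suc 0))" using S by auto
  have d1: "d (Suc 0) \<in> hom C (S (Suc 0)) (S (Suc (Suc 0)))" using S by auto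
  obtain c j where c: "is_cokernel C (d 0) c" and j: "mono_mor C j" "j \<in> hom C (Cod C c) (Cod C (d (Suc 0)))"
    and dj: "d (Suc 0) = Comp C j c" using exact_mono_factor S(5) by blast
  define X1 where "X1 = Cod C c"
  have ch: "c \<in> hom C (S (Suc 0)) X1" using cokerD[OF c] d0 hom_iff X1_def by auto
  have jh: "j \<in> hom C X1 (S (Suc (Suc 0)))" using j d1 hom_iff X1_def by auto
  have cepi: "epi_mor C c" using coker_epi c by auto
  have ker: "is_kernel C c (d 0)" using mono_ker_coker S(4) c by auto
  have res: "inj_res_len C X1 m"
    unfolding inj_res_len_def
  proof (intro exI[of _ "\<lambda>k. if k = 0 then X1 else S (Suc k)"] exI[of _ "\<lambda>k. if k = 0 then j else d (Suc k)"] conjI allI impI)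
    show "(if 0 = 0 then X1 else S (Suc 0)) = X1" by simp
    fix k assume "k \<le> m"
    then show "(if k = 0 then j else d (Suc k)) \<in> hom C (if k = 0 then X1 else S (Suc k)) (if Suc k = 0 then X1 else S (Suc (Suc k)))"
      using jh S(2) by auto
  next
    fix k assume "k \<le> m"
    then show "injective C (if Suc k = 0 then X1 else S (Suc (Suc k)))" using S(3) by auto
  next
    show "mono_mor C (if 0 = 0 then j else d (Suc 0))" using j by simp
  next
    fix k assume k: "k < m"
    show "exact_at C (if k = 0 then j else d (Suc k)) (if Suc k = 0 then j else d (Suc (Suc k)))"
    proof (cases "k = 0")
      case True
      have "exact_at C (d (Suc 0)) (d (Suc (Suc 0)))" using S(5) k True by auto
      then have "exact_at C j (d (Suc (Suc 0)))" using dj exact_precomp[OF cepi ch jh] by simp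
      then show ?thesis using True by simp
    next
      case False
      then show ?thesis using S(5) k by auto
    qed
  next
    show "epi_mor C (if m = 0 then j else d (Suc m))"
    proof (cases "m = 0")
      case True
      then show ?thesis using S(6) dj epi_left[OF _ ch jh] by simp
    next
      case False
      then show ?thesis using S(6) by simp
    qed
  qed
  have ph: "\<phi> \<in> hom C (T (Suc 0)) X" by (rule Suc.prems(5))
  have eh: "\<And>k. e k \<in> hom C (T k) (T (Suc k))" using Suc.prems(2) by auto
  have dp: "Comp C (d 0) \<phi> \<in> hom C (T (Suc 0)) (S (Suc 0))" using comp_hom ph d0 by auto
  have "Comp C (Comp C (d 0) \<phi>) (e 0) = Comp C (d 0) (Comp C \<phi> (e 0))"
    using assoc[OF eh ph d0] by simp
  also have "\<dots> = Zero C (T 0) (S (Suc 0))" using Suc.prems(6) comp_zero_r d0 hom_obj[OF eh[of 0]] by simp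
  finally obtain g0 where g0: "g0 \<in> hom C (T (Suc (Suc 0))) (S (Suc 0))" "Comp C g0 (e (Suc 0)) = Comp C (d 0) \<phi>"
    using inj_ext[OF _ eh eh _ dp] Suc.prems(3) S(3) by blast
  define h where "h = Comp C c g0"
  have hh: "h \<in> hom C (T (Suc (Suc 0))) X1" using comp_hom g0 ch h_def by auto
  have cd0: "Comp C c (d 0) = Zero C X X1" using cokerD[OF c] d0 ch hom_iff by auto
  have "Comp C h (e (Suc 0)) = Comp C (Comp C c (d 0)) \<phi>"
    using h_def assoc[OF eh g0(1) ch] g0 assoc[OF ph d0 ch] by simp
  also have "\<dots> = Zero C (T (Suc 0)) X1" using cd0 comp_zero_l ph hom_obj ch by simp
  finally have he: "Comp C h (e (Suc 0)) = Zero C (T (Suc 0)) X1" .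
  obtain h' where h': "h' \<in> hom C (T (Suc (Suc (Suc 0)))) X1" "Comp C h' (e (Suc (Suc 0))) = h"
    using Suc.IH[OF res, of "\<lambda>k. e (Suc k)" "\<lambda>k. T (Suc k)" h] Suc.prems(2-4) hh he by auto
  have "projective C (T (Suc (Suc (Suc 0))))" using Suc.prems(4) by auto
  then obtain h'' where h'': "h'' \<in> hom C (T (Suc (Suc (Suc 0)))) (S (Suc 0))" "Comp C c h'' = h'"
    using cepi h' ch hom_iff unfolding projective_def X1_def by metis
  define w where "w = Comp C h'' (e (Suc (Suc 0)))"
  have wh: "w \<in> hom C (T (Suc (Suc 0))) (S (Suc 0))" using comp_hom[OF eh h''(1)] w_def by auto
  obtain n where n: "n \<in> hom C (T (Suc (Suc 0))) (S (Suc 0))" "Add C w n = Zero C (T (Suc (Suc 0))) (S (Suc 0))"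
    using neg_ex wh by blast
  define z where "z = Add C g0 n"
  have zh: "z \<in> hom C (T (Suc (Suc 0))) (S (Suc 0))" using add_hom g0 n z_def by auto
  have cw: "Comp C c w = h" using w_def assoc[OF eh h''(1) ch] h'' h' by simp
  have "Comp C c z = Add C h (Comp C c n)" using z_def distl[OF g0(1) n(1) ch] h_def by simp
  also have "\<dots> = Comp C c (Add C w n)" using distl[OF wh n(1) ch] cw by simp
  also have "\<dots> = Zero C (T (Suc (Suc 0))) X1" using n(2) comp_zero_r ch hom_obj wh by simp
  finally have cz: "Comp C c z = Zero C (T (Suc (Suc 0))) X1" .
  obtain \<psi> where psi: "\<psi> \<in> hom C (T (Suc (Suc 0))) (Dom C (d 0))" "Comp C (d 0) \<psi> = z"
    using ker_factor'[OF ker, of z "T (Suc (Suc 0))"] zh cz ch hom_iff by auto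
  have psih: "\<psi> \<in> hom C (T (Suc (Suc 0))) X" using psi d0 hom_iff by auto
  have ee: "Comp C (e (Suc (Suc 0))) (e (Suc 0)) = Zero C (T (Suc 0)) (T (Suc (Suc (Suc 0))))"
    using exact_comp_zero Suc.prems(3) eh hom_iff by metis
  have we: "Comp C w (e (Suc 0)) = Zero C (T (Suc 0)) (S (Suc 0))"
    using w_def assoc[OF eh eh h''(1)] ee comp_zero_r h''(1) hom_obj eh by metis
  have "Add C (Comp C w (e (Suc 0))) (Comp C n (e (Suc 0))) = Zero C (T (Suc 0)) (S (Suc 0))"
    using distr[OF eh wh n(1)] n(2) comp_zero_l eh hom_obj wh by metis
  then have ne: "Comp C n (e (Suc 0)) = Zero C (T (Suc 0)) (S (Suc 0))"
    using we zero_add comp_hom[OF eh n(1)] by metis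
  have "Comp C z (e (Suc 0)) = Add C (Comp C (d 0) \<phi>) (Zero C (T (Suc 0)) (S (Suc 0)))"
    using z_def distr[OF eh g0(1) n(1)] g0 ne by simp
  also have "\<dots> = Comp C (d 0) \<phi>" using add_zero dp by simp
  finally have "Comp C (d 0) (Comp C \<psi> (e (Suc 0))) = Comp C (d 0) \<phi>"
    using assoc[OF eh psih d0] psi by simp
  then have "Comp C \<psi> (e (Suc 0)) = \<phi>" using monoD[OF S(4) d0 comp_hom[OF eh psih] ph] by simp
  then show ?case using psih by auto
qed

end

context ab
begin

definition pe :: "'o \<Rightarrow> 'o \<times> 'm" where
  "pe A = (SOME p. projective C (fst p) \<and> snd p \<in> hom C (fst p) A \<and> epi_mor C (snd p))"

lemma pe_prop: assumes "enough_projectives C" "A \<in> Obj C"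
  shows "projective C (fst (pe A)) \<and> snd (pe A) \<in> hom C (fst (pe A)) A \<and> epi_mor C (snd (pe A))"
proof -
  obtain P e where "projective C P" "e \<in> hom C P A" "epi_mor C e"
    using assms unfolding enough_projectives_def by blast
  then have "\<exists>p. projective C (fst p) \<and> snd p \<in> hom C (fst p) A \<and> epi_mor C (snd p)"
    by (intro exI[of _ "(P, e)"]) auto
  then show ?thesis unfolding pe_def by (rule someI_ex)
qed

definition kr :: "'m \<Rightarrow> 'm" where "kr f = (SOME k. is_kernel C f k)"

lemma kr_prop: "f \<in> Mor C \<Longrightarrow> is_kernel C f (kr f)"
  unfolding kr_def using ker_ex by (rule someI_ex) 

lemma int_cases3: fixes i :: int
  obtains n where "i = int n" | "i = -1" | n where "i = - int n - 2"
proof -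
  consider "i \<ge> 0" | "i = -1" | "i \<le> -2" by linarith
  then show ?thesis
  proof cases
    case 1 then show ?thesis using that(1)[of "nat i"] by simp
  next
    case 2 then show ?thesis using that(2) by simp
  next
    case 3 then show ?thesis using that(3)[of "nat (- i - 2)"] by simp
  qed
qed

lemma inj_dim_fin: assumes "inj_dim C R \<noteq> \<infinity>" shows "\<exists>m. inj_res_len C R m"
proof (rule ccontr)
  assume "\<not> (\<exists>m. inj_res_len C R m)"
  then have "{n. inj_res_len C R n} = {}" by auto
  then have "inj_dim C R = Inf (enat ` {})" unfolding inj_dim_def by (simp only:)
  then have "inj_dim C R = \<infinity>" by (simp add: top_enat_def)
  then show False using assms by simp
qed

lemma main:
  assumes EP: "enough_projectives C" and SI: "sidp C < \<infinity>" and M: "M \<in> Obj C"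
    and S0: "S 0 = M" and dS: "\<forall>i. dS i \<in> hom C (S i) (S (Suc i))"
    and SP: "\<forall>i. projective C (S (Suc i))" and m0: "mono_mor C (dS 0)"
    and Sx: "\<forall>i. exact_at C (dS i) (dS (Suc i))"
  shows "gorenstein_projective C M"
proof -
  define A where "A = rec_nat M (\<lambda>_ a. Dom C (kr (snd (pe a))))"
  define Q where "Q n = fst (pe (A n))" for n
  define E where "E n = snd (pe (A n))" for n
  define K where "K n = kr (E n)" for n
  have A0: "A 0 = M" and AS: "\<And>n. A (Suc n) = Dom C (K n)" unfolding A_def K_def E_def by auto
  have AO: "A n \<in> Obj C \<and> projective C (Q n) \<and> E n \<in> hom C (Q n) (A n) \<and> epi_mor C (E n) \<and>
      is_kernel C (E n) (K n) \<and> K n \<in> hom C (A (Suc n)) (Q n)" for n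
  proof (induction n)
    case 0
    have o: "A 0 \<in> Obj C" using A0 M by simp
    have p: "projective C (Q 0) \<and> E 0 \<in> hom C (Q 0) (A 0) \<and> epi_mor C (E 0)"
      using pe_prop[OF EP o] Q_def E_def by simp
    have k: "is_kernel C (E 0) (K 0)" using kr_prop p hom_iff K_def by auto
    have "K 0 \<in> hom C (A (Suc 0)) (Q 0)" using kerD[OF k] AS p hom_iff by auto
    then show ?case using o p k by auto
  next
    case (Suc n)
    have o: "A (Suc n) \<in> Obj C" using Suc hom_obj by blast
    have p: "projective C (Q (Suc n)) \<and> E (Suc n) \<in> hom C (Q (Suc n)) (A (Suc n)) \<and> epi_mor C (E (Suc n))"
      using pe_prop[OF EP o] Q_def E_def by simp
    have k: "is_kernel C (E (Suc n)) (K (Suc n))" using kr_prop p hom_iff K_def by auto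
    have "K (Suc n) \<in> hom C (A (Suc (Suc n))) (Q (Suc n))" using kerD[OF k] AS p hom_iff by auto
    then show ?case using o p k by auto
  qed
  define P where "P i = (if i \<ge> 0 then S (Suc (nat i)) else Q (nat (- i - 1)))" for i :: int
  define d where "d i = (if i \<ge> 0 then dS (Suc (nat i)) else if i = -1 then Comp C (dS 0) (E 0)
      else Comp C (K (nat (- i - 2))) (E (nat (- i - 1))))" for i :: int
  have Pn: "P (int n) = S (Suc n)" "d (int n) = dS (Suc n)" for n unfolding P_def d_def by auto
  have Pm1: "P (-1) = Q 0" "d (-1) = Comp C (dS 0) (E 0)" unfolding P_def d_def by auto
  have Pm: "P (- int n - 2) = Q (Suc n)" "d (- int n - 2) = Comp C (K n) (E (Suc n))" for n
    unfolding P_def d_def by (auto simp: nat_add_distrib)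
  have dS0: "dS 0 \<in> hom C M (S (Suc 0))" using dS S0 by metis
  have Pproj: "projective C (P i)" for i
    by (cases i rule: int_cases3) (use Pn Pm1 Pm SP AO in auto)
  have dhom: "d i \<in> hom C (P i) (P (i + 1))" for i
  proof (cases i rule: int_cases3)
    case (1 n)
    have "P (i + 1) = S (Suc (Suc n))" using Pn[of "Suc n"] 1 by (simp add: add.commute)
    then show ?thesis using 1 Pn dS by simp
  next
    case 2
    then show ?thesis using Pm1 Pn[of 0] comp_hom[of "E 0" "Q 0" M "dS 0" "S (Suc 0)"] AO[of 0] A0 dS0 by simp
  next
    case (3 n)
    have "P (i + 1) = Q n"
    proof (cases n)
      case 0 then show ?thesis using 3 Pm1 by simp
    next
      case (Suc k)
      have h: "i + 1 = - int k - 2" using 3 Suc by simp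
      show ?thesis unfolding h using Pm(1)[of k] Suc by simp
    qed
    then show ?thesis using 3 Pm comp_hom AO by (metis)
  qed
  have dex: "exact_at C (d i) (d (i + 1))" for i
  proof (cases i rule: int_cases3)
    case (1 n)
    have "d (i + 1) = dS (Suc (Suc n))" using Pn[of "Suc n"] 1 by (simp add: add.commute)
    then show ?thesis using 1 Pn Sx by simp
  next
    case 2
    have "exact_at C (dS 0) (dS (Suc 0))" using Sx by simp
    then show ?thesis using 2 Pm1 Pn[of 0] exact_precomp[of "E 0" "Q 0" M "dS 0" "S (Suc 0)"] AO[of 0] A0 dS0
      by simp
  next
    case (3 n)
    show ?thesis
    proof (cases n)
      case 0
      have e1: "exact_at C (K 0) (E 0)" using exact_ker AO by blast
      have "exact_at C (K 0) (Comp C (dS 0) (E 0))"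
        using e1 exact_postcomp[OF m0, of M "S (Suc 0)" "E 0" "Q 0" "K 0"] dS0 AO[of 0] A0 by simp
      then have "exact_at C (Comp C (K 0) (E (Suc 0))) (Comp C (dS 0) (E 0))"
        using exact_precomp[of "E (Suc 0)" "Q (Suc 0)" "A (Suc 0)" "K 0" "Q 0"] AO by simp
      then show ?thesis using 3 0 Pm[of 0] Pm1 by simp
    next
      case (Suc k)
      have e1: "exact_at C (K n) (E n)" using exact_ker AO by blast
      have mk: "mono_mor C (K k)" using ker_mono AO by blast
      have "exact_at C (K n) (Comp C (K k) (E n))"
        using e1 exact_postcomp[OF mk, of "A n" "Q k" "E n" "Q n" "K n"] AO[of k] AO[of n] Suc by simp
      then have "exact_at C (Comp C (K n) (E (Suc n))) (Comp C (K k) (E n))"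
        using exact_precomp[of "E (Suc n)" "Q (Suc n)" "A (Suc n)" "K n" "Q n"] AO by simp
      moreover have h: "i + 1 = - int k - 2" using 3 Suc by simp
      have "d (i + 1) = Comp C (K k) (E n)" unfolding h using Suc Pm(2)[of k] by simp
      ultimately show ?thesis using 3 Pm by simp
    qed
  qed
  have homc: "\<exists>\<psi>\<in>hom C (P (i + 1)) R. \<phi> = Comp C \<psi> (d i)"
    if R: "projective C R" and ph: "\<phi> \<in> hom C (P i) R" and pz: "Comp C \<phi> (d (i - 1)) = Zero C (P (i - 1)) R"
    for R i \<phi>
  proof -
    have "inj_dim C R \<le> sidp C" unfolding sidp_def using R by (auto intro: SUP_upper)
    then have "inj_dim C R < \<infinity>" using SI by (rule le_less_trans)
    then have "inj_dim C R \<noteq> \<infinity>" by simp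
    then obtain m where m: "inj_res_len C R m" using inj_dim_fin by blast
    define T where "T j = P (i - 1 + int j)" for j
    define e where "e j = d (i - 1 + int j)" for j
    have TS: "i - 1 + int (Suc j) = (i - 1 + int j) + 1" for j by simp
    have 1: "\<forall>j. e j \<in> hom C (T j) (T (Suc j))" unfolding T_def e_def using dhom TS by metis
    have 2: "\<forall>j. exact_at C (e j) (e (Suc j))" unfolding e_def using dex TS by metis
    have 3: "\<forall>j. projective C (T j)" unfolding T_def using Pproj by auto
    have 4: "\<phi> \<in> hom C (T (Suc 0)) R" unfolding T_def using ph by simp
    have 5: "Comp C \<phi> (e 0) = Zero C (T 0) R" unfolding T_def e_def using pz by simp
    obtain \<psi> where "\<psi> \<in> hom C (T (Suc (Suc 0))) R" "Comp C \<psi> (e (Suc 0)) = \<phi>"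
      using claim[OF m 1 2 3 4 5] by blast
    moreover have "T (Suc (Suc 0)) = P (i + 1)" "e (Suc 0) = d i" unfolding T_def e_def by (simp_all add: add.commute)
    ultimately show ?thesis by auto
  qed
  have kk: "is_kernel C (d 0) (dS 0)" using exact_mono_ker[OF _ m0] Sx Pn[of 0] by simp
  have "Dom C (dS 0) = M" using dS0 hom_iff by auto
  then show ?thesis unfolding gorenstein_projective_def
    using M Pproj dhom dex homc kk by blast
qed

end

theorem lemmaA3:
  fixes C :: "('o, 'm) acat" and M :: 'o
  assumes "abelian C"
    and "enough_projectives C"
    and "enough_injectives C"
    and "sidp C < \<infinity>"
    and "M \<in> Obj C"
    and "\<exists>(S :: nat \<Rightarrow> 'o) d. S 0 = M \<and>
           (\<forall>i. d i \<in> hom C (S i) (S (Suc i))) \<and>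
           (\<forall>i. projective C (S (Suc i))) \<and>
           mono_mor C (d 0) \<and>
           (\<forall>i. exact_at C (d i) (d (Suc i)))"
  shows "gorenstein_projective C M"
proof -
  interpret ab C using assms(1) by unfold_locales
  obtain S :: "nat \<Rightarrow> 'o" and d where "S 0 = M" "\<forall>i. d i \<in> hom C (S i) (S (Suc i))"
    "\<forall>i. projective C (S (Suc i))" "mono_mor C (d 0)" "\<forall>i. exact_at C (d i) (d (Suc i))"
    using assms(6) by blast
  then show ?thesis using main[OF assms(2) assms(4) assms(5)] by blast
qed

end
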